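(* Let $(X,d)$ be a finite ultrametric space with $|X|\geqslant 2$ and $X\cap\operatorname{Sp}(X)=\varnothing$. Then $(X,d)\in\mathfrak U$ if and only if the representing tree $T_X$ of $(X,d)$ is strictly binary and distinct internal nodes of $T_X$ carry distinct labels.
   Context: $\operatorname{Sp}(X)=\{d(x,y):x\neq y\}$, $\operatorname{diam}X=\max d(x,y)$; $\mathfrak U$ is the class of finite ultrametric spaces $X$ with $|\operatorname{Sp}(X)|=|X|-1$. For a finite ultrametric space with $|X|\ge2$, the relation $x\sim y\iff d(x,y)<\operatorname{diam}X$ is an equivalence relation with $k\geqslant 2$ classes $X_1,\dots,X_k$; these are the parts of the diametral graph $G_d$ (vertices $X$, edges the pairs at distance $\operatorname{diam}X$), which is complete $k$-partite $G[X_1,\dots,X_k]$. The representing tree $T_X$ (a labelled rooted tree) is defined recursively: if $X=\{x\}$, $T_X$ is a single node labelled $x$. If $|X|\geqslant2$, the root is labelled $\operatorname{diam}X$ and has $k$ children, one for each part $X_i$, the child for $X_i$ being labelled $\operatorname{diam}X_i$ if $|X_i|\ge2$ and labelled $x$ if $X_i=\{x\}$; the subtree below the child for $X_i$ with $|X_i|\ge 2$ is built from the subspace $X_i$ in the same way. Thus leaves are labelled by the points of $X$ (bijectively) and internal nodes by elements of $\operatorname{Sp}(X)$. A strictly binary tree is a rooted tree whose root is adjacent to exactly two nodes and whose non-root internal nodes (non-leaves) are adjacent to exactly three nodes; a one-node tree is strictly binary. *)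

theory Defs
  imports Complex_Main
begin

definition ultrametric :: "'a set \<Rightarrow> ('a \<Rightarrow> 'a \<Rightarrow> real) \<Rightarrow> bool" where
  "ultrametric X d \<longleftrightarrow>
     (\<forall>x\<in>X. \<forall>y\<in>X. d x y = d y x) \<and>
     (\<forall>x\<in>X. \<forall>y\<in>X. d x y = 0 \<longleftrightarrow> x = y) \<and>
     (\<forall>x\<in>X. \<forall>y\<in>X. d x y \<ge> 0) \<and>
     (\<forall>x\<in>X. \<forall>y\<in>X. \<forall>z\<in>X. d x z \<le> max (d x y) (d y z))"

definition Sp :: "('a \<Rightarrow> 'a \<Rightarrow> real) \<Rightarrow> 'a set \<Rightarrow> real set" where
  "Sp d X = {d x y | x y. x \<in> X \<and> y \<in> X \<and> x \<noteq> y}"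

definition diam :: "('a \<Rightarrow> 'a \<Rightarrow> real) \<Rightarrow> 'a set \<Rightarrow> real" where
  "diam d X = Max {d x y | x y. x \<in> X \<and> y \<in> X}"

definition in_U :: "'a set \<Rightarrow> ('a \<Rightarrow> 'a \<Rightarrow> real) \<Rightarrow> bool" where
  "in_U X d \<longleftrightarrow> finite X \<and> ultrametric X d \<and> card (Sp d X) = card X - 1"

definition parts :: "('a \<Rightarrow> 'a \<Rightarrow> real) \<Rightarrow> 'a set \<Rightarrow> 'a set set" where
  "parts d B = B // {(x, y). x \<in> B \<and> y \<in> B \<and> d x y < diam d B}"

text \<open>Each node of T_X is identified with the subset of X
  it was built from: the root is X, and a node B with |B| \<ge> 2 has one child
  for each part of B.\<close>
inductive_set tnodes :: "('a \<Rightarrow> 'a \<Rightarrow> real) \<Rightarrow> 'a set \<Rightarrow> 'a set set"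
  for d :: "'a \<Rightarrow> 'a \<Rightarrow> real" and X :: "'a set" where
  root: "X \<in> tnodes d X"
| child: "B \<in> tnodes d X \<Longrightarrow> 2 \<le> card B \<Longrightarrow> C \<in> parts d B \<Longrightarrow> C \<in> tnodes d X"

definition tinternal :: "('a \<Rightarrow> 'a \<Rightarrow> real) \<Rightarrow> 'a set \<Rightarrow> 'a set set" where
  "tinternal d X = {B \<in> tnodes d X. 2 \<le> card B}"

text \<open>Labels: points of X for leaves, elements of Sp(X) for internal nodes.
  The sum type keeps the two kinds of labels apart.\<close>
definition tlabel :: "('a \<Rightarrow> 'a \<Rightarrow> real) \<Rightarrow> 'a set \<Rightarrow> 'a + real" where
  "tlabel d B = (if 2 \<le> card B then Inr (diam d B) else Inl (the_elem B))"

definition tadj :: "('a \<Rightarrow> 'a \<Rightarrow> real) \<Rightarrow> 'a set \<Rightarrow> 'a set \<Rightarrow> 'a set \<Rightarrow> bool" where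
  "tadj d X B C \<longleftrightarrow>
     (B \<in> tinternal d X \<and> C \<in> parts d B) \<or> (C \<in> tinternal d X \<and> B \<in> parts d C)"

definition strictly_binary :: "('a \<Rightarrow> 'a \<Rightarrow> real) \<Rightarrow> 'a set \<Rightarrow> bool" where
  "strictly_binary d X \<longleftrightarrow>
     (X \<in> tinternal d X \<longrightarrow> card {C \<in> tnodes d X. tadj d X X C} = 2) \<and>
     (\<forall>B \<in> tinternal d X. B \<noteq> X \<longrightarrow> card {C \<in> tnodes d X. tadj d X B C} = 3)"

end

theory Submission
  imports Defs
begin


lemma diam_ge:
  assumes "finite B" "x \<in> B" "y \<in> B"
  shows "d x y \<le> diam d B"
proof -
  have "finite {d x y | x y. x \<in> B \<and> y \<in> B}"
  proof -
    have "{d x y | x y. x \<in> B \<and> y \<in> B} = (\<lambda>(x,y). d x y) ` (B \<times> B)" by auto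
    then show ?thesis using assms(1) by simp
  qed
  then show ?thesis unfolding diam_def using assms by (intro Max_ge) auto
qed

lemma diam_attained:
  assumes um: "ultrametric X d" and BX: "B \<subseteq> X" and fin: "finite B" and c: "2 \<le> card B"
  shows "\<exists>x\<in>B. \<exists>y\<in>B. x \<noteq> y \<and> d x y = diam d B" and "diam d B > 0"
proof -
  let ?S = "{d x y | x y. x \<in> B \<and> y \<in> B}"
  have eq: "?S = (\<lambda>(x,y). d x y) ` (B \<times> B)" by auto
  have fS: "finite ?S" using fin eq by simp
  have "\<not> card B \<le> Suc 0" using c by simp
  then obtain a b where ab: "a \<in> B" "b \<in> B" "a \<noteq> b"
    using card_le_Suc0_iff_eq[OF fin] by blast
  have pos: "d a b > 0" using um ab BX unfolding ultrametric_def
    by (metis less_eq_real_def subsetD)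
  have ne: "?S \<noteq> {}" using ab by auto
  have "Max ?S \<in> ?S" using fS ne by (rule Max_in)
  then obtain x y where xy: "x \<in> B" "y \<in> B" "diam d B = d x y" unfolding diam_def by auto
  have "d a b \<le> diam d B" using diam_ge[OF fin ab(1,2)] .
  then have dp: "diam d B > 0" using pos by simp
  then show "diam d B > 0" .
  have "x \<noteq> y"
  proof
    assume "x = y"
    then have "d x y = 0" using um BX xy unfolding ultrametric_def by auto
    then show False using xy dp by simp
  qed
  then show "\<exists>x\<in>B. \<exists>y\<in>B. x \<noteq> y \<and> d x y = diam d B" using xy by auto
qed

lemma parts_equiv:
  assumes um: "ultrametric X d" and BX: "B \<subseteq> X" and fin: "finite B" and c: "2 \<le> card B"
  shows "equiv B {(x, y). x \<in> B \<and> y \<in> B \<and> d x y < diam d B}"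
proof (rule equivI)
  let ?R = "{(x, y). x \<in> B \<and> y \<in> B \<and> d x y < diam d B}"
  have dp: "diam d B > 0" using diam_attained[OF assms] by simp
  show "?R \<subseteq> B \<times> B" by auto
  show "refl_on B ?R" unfolding refl_on_def
  proof (intro conjI ballI)
    fix x assume "x \<in> B"
    then have "d x x = 0" using um BX unfolding ultrametric_def by blast
    then show "(x, x) \<in> ?R" using dp \<open>x \<in> B\<close> by simp
  qed
  show "sym ?R"
  proof (rule symI)
    fix x y assume "(x,y) \<in> ?R" then have h: "x \<in> B" "y \<in> B" "d x y < diam d B" by auto
    have "d x y = d y x" using um BX h unfolding ultrametric_def by blast
    then show "(y, x) \<in> ?R" using h by simp
  qed
  show "trans ?R"
  proof (rule transI)
    fix x y z assume "(x,y) \<in> ?R" "(y,z) \<in> ?R"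
    then have h: "x \<in> B" "y \<in> B" "d x y < diam d B" "z \<in> B" "d y z < diam d B" by auto
    have "d x z \<le> max (d x y) (d y z)" using um BX h unfolding ultrametric_def by blast
    then show "(x, z) \<in> ?R" using h by simp
  qed
qed

lemma parts_sub: "P \<in> parts d B \<Longrightarrow> P \<subseteq> B"
  unfolding parts_def by (auto elim!: quotientE)

context
  fixes X :: "'a set" and d :: "'a \<Rightarrow> 'a \<Rightarrow> real" and B :: "'a set"
  assumes um: "ultrametric X d" and BX: "B \<subseteq> X" and fin: "finite B" and c: "2 \<le> card B"
begin

lemma eqv: "equiv B {(x, y). x \<in> B \<and> y \<in> B \<and> d x y < diam d B}"
  using parts_equiv[OF um BX fin c] .

lemma parts_ne: "P \<in> parts d B \<Longrightarrow> P \<noteq> {}"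
  unfolding parts_def using eqv by (auto elim!: quotientE dest: equiv_class_self)

lemma parts_disj: "P \<in> parts d B \<Longrightarrow> Q \<in> parts d B \<Longrightarrow> P \<noteq> Q \<Longrightarrow> P \<inter> Q = {}"
  unfolding parts_def using eqv quotient_disj by blast

lemma parts_Union: "\<Union>(parts d B) = B"
  unfolding parts_def using eqv Union_quotient by blast

lemma parts_fin: "finite (parts d B)"
  unfolding parts_def using fin by (intro finite_quotient) auto

lemma parts_same: "P \<in> parts d B \<Longrightarrow> x \<in> P \<Longrightarrow> y \<in> P \<Longrightarrow> d x y < diam d B"
proof -
  assume "P \<in> parts d B" "x \<in> P" "y \<in> P"
  then obtain z where z: "z \<in> B" "P = {(x, y). x \<in> B \<and> y \<in> B \<and> d x y < diam d B} `` {z}"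
    unfolding parts_def by (auto elim!: quotientE)
  then have "(z,x) \<in> {(x, y). x \<in> B \<and> y \<in> B \<and> d x y < diam d B}"
       "(z,y) \<in> {(x, y). x \<in> B \<and> y \<in> B \<and> d x y < diam d B}"
    using \<open>x \<in> P\<close> \<open>y \<in> P\<close> by auto
  then have "(x,y) \<in> {(x, y). x \<in> B \<and> y \<in> B \<and> d x y < diam d B}"
    using eqv unfolding equiv_def sym_def trans_def by blast
  then show ?thesis by simp
qed

lemma parts_diff: "P \<in> parts d B \<Longrightarrow> Q \<in> parts d B \<Longrightarrow> P \<noteq> Q \<Longrightarrow> x \<in> P \<Longrightarrow> y \<in> Q
   \<Longrightarrow> d x y = diam d B"
proof -
  assume h: "P \<in> parts d B" "Q \<in> parts d B" "P \<noteq> Q" "x \<in> P" "y \<in> Q"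
  obtain z where z: "z \<in> B" "P = {(x, y). x \<in> B \<and> y \<in> B \<and> d x y < diam d B} `` {z}"
    using h(1) unfolding parts_def by (auto elim!: quotientE)
  have xB: "x \<in> B" "y \<in> B" using h parts_sub by blast+
  have "\<not> d x y < diam d B"
  proof
    assume "d x y < diam d B"
    then have "(x,y) \<in> {(x, y). x \<in> B \<and> y \<in> B \<and> d x y < diam d B}" using xB by simp
    moreover have "(z,x) \<in> {(x, y). x \<in> B \<and> y \<in> B \<and> d x y < diam d B}" using z h(4) by auto
    ultimately have "(z,y) \<in> {(x, y). x \<in> B \<and> y \<in> B \<and> d x y < diam d B}"
      using eqv unfolding equiv_def trans_def by blast
    then have "y \<in> P" using z by auto
    then show False using h parts_disj by blast
  qed
  then show ?thesis using diam_ge[OF fin xB, of d] by simp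
qed

lemma parts_card2: "2 \<le> card (parts d B)"
proof -
  obtain x y where xy: "x \<in> B" "y \<in> B" "x \<noteq> y" "d x y = diam d B"
    using diam_attained(1)[OF um BX fin c] by blast
  obtain P where P: "P \<in> parts d B" "x \<in> P" using xy parts_Union by blast
  obtain Q where Q: "Q \<in> parts d B" "y \<in> Q" using xy parts_Union by blast
  have "P \<noteq> Q"
  proof
    assume "P = Q"
    then have "d x y < diam d B" using parts_same[OF P(1) P(2)] Q(2) by simp
    then show False using xy by simp
  qed
  then have "card {P, Q} = 2" by simp
  moreover have "{P,Q} \<subseteq> parts d B" using P Q by simp
  ultimately show ?thesis using card_mono[OF parts_fin] by metis
qed

lemma parts_not_self: "B \<notin> parts d B"
proof
  assume "B \<in> parts d B"
  obtain x y where xy: "x \<in> B" "y \<in> B" "x \<noteq> y" "d x y = diam d B"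
    using diam_attained(1)[OF um BX fin c] by blast
  show False using parts_same[OF \<open>B \<in> parts d B\<close> xy(1,2)] xy by simp
qed

lemma parts_sum: "(\<Sum>P\<in>parts d B. card P) = card B"
proof -
  have "card (\<Union>(parts d B)) = sum card (parts d B)"
  proof (rule card_Union_disjoint)
    show "pairwise disjnt (parts d B)" using parts_disj by (auto simp: pairwise_def disjnt_def)
    fix A assume "A \<in> parts d B"
    then show "finite A" using parts_sub[of A d B] fin finite_subset by blast
  qed
  then show ?thesis using parts_Union by simp
qed

lemma parts_card_less: "P \<in> parts d B \<Longrightarrow> card P < card B"
proof -
  assume P: "P \<in> parts d B"
  have "P \<noteq> B" using P parts_not_self by auto
  then show ?thesis using P parts_sub fin by (meson psubsetI psubset_card_mono)
qed

end


lemma tnodes_sub: "N \<in> tnodes d B \<Longrightarrow> N \<subseteq> B"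
  by (induction rule: tnodes.induct) (auto dest: parts_sub)

lemma tnodes_trans: "C \<in> tnodes d P \<Longrightarrow> P \<in> tnodes d B \<Longrightarrow> C \<in> tnodes d B"
  by (induction rule: tnodes.induct) (auto intro: tnodes.child)

lemma tnodes_small: "card B < 2 \<Longrightarrow> tnodes d B = {B}"
proof
  assume c: "card B < 2"
  show "tnodes d B \<subseteq> {B}"
  proof
    fix N assume "N \<in> tnodes d B" then show "N \<in> {B}"
      by (induction rule: tnodes.induct) (use c in auto)
  qed
qed (auto intro: tnodes.root)

lemma tnodes_dec: "2 \<le> card B \<Longrightarrow> tnodes d B = insert B (\<Union>P\<in>parts d B. tnodes d P)"
proof
  assume c: "2 \<le> card B"
  show "tnodes d B \<subseteq> insert B (\<Union>P\<in>parts d B. tnodes d P)"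
  proof
    fix N assume "N \<in> tnodes d B" then show "N \<in> insert B (\<Union>P\<in>parts d B. tnodes d P)"
    proof (induction rule: tnodes.induct)
      case root then show ?case by simp
    next
      case (child D C)
      then show ?case by (auto intro: tnodes.root tnodes.child)
    qed
  qed
  show "insert B (\<Union>P\<in>parts d B. tnodes d P) \<subseteq> tnodes d B"
  proof
    fix N assume "N \<in> insert B (\<Union>P\<in>parts d B. tnodes d P)"
    then show "N \<in> tnodes d B"
    proof
      assume "N \<in> (\<Union>P\<in>parts d B. tnodes d P)"
      then obtain P where P: "P \<in> parts d B" "N \<in> tnodes d P" by blast
      have "P \<in> tnodes d B" using P(1) c by (intro tnodes.child[OF tnodes.root])
      then show ?thesis using tnodes_trans P(2) by blast
    qed (simp add: tnodes.root)
  qed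
qed

lemma tint_small: "card B < 2 \<Longrightarrow> tinternal d B = {}"
  unfolding tinternal_def using tnodes_small[of B d] by auto

lemma tint_dec: "2 \<le> card B \<Longrightarrow> tinternal d B = insert B (\<Union>P\<in>parts d B. tinternal d P)"
proof -
  assume c: "2 \<le> card B"
  have "tinternal d B = {N \<in> insert B (\<Union>P\<in>parts d B. tnodes d P). 2 \<le> card N}"
    unfolding tinternal_def using tnodes_dec[OF c, of d] by simp
  also have "\<dots> = insert B (\<Union>P\<in>parts d B. {N \<in> tnodes d P. 2 \<le> card N})"
    using c by blast
  finally show ?thesis unfolding tinternal_def .
qed

lemma tint_fin: "finite B \<Longrightarrow> finite (tinternal d B)"
proof -
  assume "finite B"
  have "tinternal d B \<subseteq> Pow B" unfolding tinternal_def using tnodes_sub by auto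
  then show ?thesis using \<open>finite B\<close> finite_subset by blast
qed

lemma tint_sub: "I \<in> tinternal d B \<Longrightarrow> I \<subseteq> B"
  unfolding tinternal_def using tnodes_sub by auto


lemma Sp_dec:
  assumes um: "ultrametric X d" and BX: "B \<subseteq> X" and fin: "finite B" and c: "2 \<le> card B"
  shows "Sp d B = insert (diam d B) (\<Union>P\<in>parts d B. Sp d P)"
proof
  show "Sp d B \<subseteq> insert (diam d B) (\<Union>P\<in>parts d B. Sp d P)"
  proof
    fix s assume "s \<in> Sp d B"
    then obtain x y where xy: "x \<in> B" "y \<in> B" "x \<noteq> y" "s = d x y" unfolding Sp_def by auto
    obtain P where P: "P \<in> parts d B" "x \<in> P" using xy parts_Union[OF um BX fin c] by blast
    obtain Q where Q: "Q \<in> parts d B" "y \<in> Q" using xy parts_Union[OF um BX fin c] by blast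
    show "s \<in> insert (diam d B) (\<Union>P\<in>parts d B. Sp d P)"
    proof (cases "P = Q")
      case True
      then have "s \<in> Sp d P" using P Q xy unfolding Sp_def by auto
      then show ?thesis using P by auto
    next
      case False
      then show ?thesis using parts_diff[OF um BX fin c P(1) Q(1) False P(2) Q(2)] xy by simp
    qed
  qed
  show "insert (diam d B) (\<Union>P\<in>parts d B. Sp d P) \<subseteq> Sp d B"
  proof -
    have "diam d B \<in> Sp d B" using diam_attained(1)[OF um BX fin c] unfolding Sp_def by force
    moreover have "Sp d P \<subseteq> Sp d B" if "P \<in> parts d B" for P
      using parts_sub[OF that] unfolding Sp_def by blast
    ultimately show ?thesis by blast
  qed
qed

lemma count:
  assumes um: "ultrametric X d" and fX: "finite X"
  shows "B \<subseteq> X \<Longrightarrow> B \<noteq> {} \<Longrightarrow> Sp d B = diam d ` tinternal d B \<and> card (tinternal d B) + 1 \<le> card B \<and>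
     (card (tinternal d B) + 1 = card B \<longleftrightarrow> (\<forall>I\<in>tinternal d B. card (parts d I) = 2))"
proof (induction "card B" arbitrary: B rule: less_induct)
  case less
  have fin: "finite B" using less.prems fX finite_subset by blast
  show ?case
  proof (cases "card B < 2")
    case True
    have "card B \<noteq> 0" using less.prems(2) fin by simp
    then have "card B = 1" using True by linarith
    then obtain x where Bx: "B = {x}" using card_1_singletonE by blast
    have "Sp d B = {}" unfolding Sp_def Bx by auto
    then show ?thesis using tint_small[OF True, of d] \<open>card B = 1\<close> by simp
  next
    case False
    then have c: "2 \<le> card B" by simp
    define T where "T = (\<lambda>P. tinternal d P)"
    have IH: "Sp d P = diam d ` T P \<and> card (T P) + 1 \<le> card P \<and>
     (card (T P) + 1 = card P \<longleftrightarrow> (\<forall>I\<in>T P. card (parts d I) = 2))" if P: "P \<in> parts d B" for P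
    proof -
      have "P \<subseteq> X" using parts_sub[OF P] less.prems(1) by (rule order_trans)
      from less.hyps[OF parts_card_less[OF um less.prems(1) fin c P] this
        parts_ne[OF um less.prems(1) fin c P]]
      show ?thesis by (simp only: T_def)
    qed
    have pf: "finite (parts d B)" using parts_fin[OF um less.prems(1) fin c] .
    have p2: "2 \<le> card (parts d B)" using parts_card2[OF um less.prems(1) fin c] .
    have dec: "tinternal d B = insert B (\<Union>P\<in>parts d B. T P)" unfolding T_def using tint_dec[OF c] .
    have notin: "B \<notin> (\<Union>P\<in>parts d B. T P)"
    proof
      assume "B \<in> (\<Union>P\<in>parts d B. T P)"
      then obtain P where P: "P \<in> parts d B" "B \<in> T P" by blast
      have "B \<subseteq> P" using tint_sub P(2) unfolding T_def by blast
      then have "P = B" using parts_sub[OF P(1)] by blast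
      then show False using P(1) parts_not_self[OF um less.prems(1) fin c] by simp
    qed
    have Tfin: "finite (T P)" if "P \<in> parts d B" for P
      unfolding T_def using tint_fin fin parts_sub[OF that] finite_subset by blast
    have Tdisj: "T P \<inter> T Q = {}" if "P \<in> parts d B" "Q \<in> parts d B" "P \<noteq> Q" for P Q
    proof (rule ccontr)
      assume "T P \<inter> T Q \<noteq> {}"
      then obtain I where I: "I \<in> T P" "I \<in> T Q" by blast
      then have "I \<subseteq> P \<inter> Q" using tint_sub unfolding T_def by blast
      then have "I = {}" using parts_disj[OF um less.prems(1) fin c that] by blast
      moreover have "2 \<le> card I" using I unfolding T_def tinternal_def by blast
      ultimately show False by simp
    qed
    have cardU: "card (\<Union>P\<in>parts d B. T P) = (\<Sum>P\<in>parts d B. card (T P))"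
      by (rule card_UN_disjoint) (use pf Tfin Tdisj in auto)
    have cardT: "card (tinternal d B) = Suc (\<Sum>P\<in>parts d B. card (T P))"
      unfolding dec using notin cardU pf Tfin by (simp add: card_insert_if)
    have sumle: "(\<Sum>P\<in>parts d B. card (T P) + 1) \<le> (\<Sum>P\<in>parts d B. card P)"
      by (rule sum_mono) (use IH in blast)
    have sumsplit: "(\<Sum>P\<in>parts d B. card (T P) + 1) = (\<Sum>P\<in>parts d B. card (T P)) + card (parts d B)"
      unfolding sum.distrib by simp
    have sp: "(\<Sum>P\<in>parts d B. card P) = card B" using parts_sum[OF um less.prems(1) fin c] .
    have le: "card (tinternal d B) + 1 \<le> card B" using cardT sumle sumsplit sp p2 by linarith
    have eqiff: "card (tinternal d B) + 1 = card B \<longleftrightarrow>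
        card (parts d B) = 2 \<and> (\<forall>P\<in>parts d B. card (T P) + 1 = card P)"
    proof
      assume h: "card (tinternal d B) + 1 = card B"
      have "card (parts d B) = 2" using h cardT sumle sumsplit sp p2 by linarith
      moreover have "\<forall>P\<in>parts d B. card (T P) + 1 = card P"
      proof (rule ccontr)
        assume "\<not> (\<forall>P\<in>parts d B. card (T P) + 1 = card P)"
        then have "\<exists>P\<in>parts d B. card (T P) + 1 < card P" using IH by (meson le_neq_implies_less)
        then have "(\<Sum>P\<in>parts d B. card (T P) + 1) < (\<Sum>P\<in>parts d B. card P)"
          using pf IH by (intro sum_strict_mono_ex1) auto
        then show False using h cardT sumsplit sp p2 by linarith
      qed
      ultimately show "card (parts d B) = 2 \<and> (\<forall>P\<in>parts d B. card (T P) + 1 = card P)" by blast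
    next
      assume h: "card (parts d B) = 2 \<and> (\<forall>P\<in>parts d B. card (T P) + 1 = card P)"
      then have "(\<Sum>P\<in>parts d B. card (T P) + 1) = (\<Sum>P\<in>parts d B. card P)" by simp
      then show "card (tinternal d B) + 1 = card B" using h cardT sumsplit sp by linarith
    qed
    have bin: "(\<forall>I\<in>tinternal d B. card (parts d I) = 2) \<longleftrightarrow>
        card (parts d B) = 2 \<and> (\<forall>P\<in>parts d B. \<forall>I\<in>T P. card (parts d I) = 2)"
      unfolding dec by blast
    have third: "card (tinternal d B) + 1 = card B \<longleftrightarrow> (\<forall>I\<in>tinternal d B. card (parts d I) = 2)"
      unfolding eqiff bin using IH by blast
    have "Sp d B = diam d ` tinternal d B"
      unfolding Sp_dec[OF um less.prems(1) fin c] dec using IH by auto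
    then show ?thesis using le third by blast
  qed
qed


lemma noparent:
  assumes um: "ultrametric X d" and BX: "B \<subseteq> X" and fX: "finite X"
    and C: "C \<in> tinternal d B"
  shows "B \<notin> parts d C"
proof
  assume h: "B \<in> parts d C"
  have "C \<subseteq> B" using tint_sub[OF C] .
  moreover have "B \<subseteq> C" using parts_sub[OF h] .
  ultimately have "C = B" by blast
  moreover have "C \<notin> parts d C"
  proof (rule parts_not_self[OF um])
    show CX: "C \<subseteq> X" using \<open>C \<subseteq> B\<close> BX by (rule order_trans)
    show "finite C" using CX fX by (rule finite_subset)
    show "2 \<le> card C" using C unfolding tinternal_def by simp
  qed
  ultimately show False using h by simp
qed

lemma parent:
  assumes um: "ultrametric X d" and fX: "finite X"
  shows "B \<subseteq> X \<Longrightarrow> B \<noteq> {} \<Longrightarrow> \<forall>N \<in> tnodes d B. N \<noteq> B \<longrightarrow>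
     (\<exists>C\<in>tinternal d B. N \<in> parts d C \<and> (\<forall>C'\<in>tinternal d B. N \<in> parts d C' \<longrightarrow> C' = C))"
proof (induction "card B" arbitrary: B rule: less_induct)
  case less
  have fin: "finite B" using less.prems fX finite_subset by blast
  show ?case
  proof (cases "card B < 2")
    case True
    then show ?thesis using tnodes_small[OF True, of d] by simp
  next
    case False
    then have c: "2 \<le> card B" by simp
    have IH: "\<forall>N \<in> tnodes d P. N \<noteq> P \<longrightarrow>
     (\<exists>C\<in>tinternal d P. N \<in> parts d C \<and> (\<forall>C'\<in>tinternal d P. N \<in> parts d C' \<longrightarrow> C' = C))"
      if P: "P \<in> parts d B" for P
    proof -
      have "P \<subseteq> X" using parts_sub[OF P] less.prems(1) by (rule order_trans)
      from less.hyps[OF parts_card_less[OF um less.prems(1) fin c P] this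
        parts_ne[OF um less.prems(1) fin c P]]
      show ?thesis .
    qed
    have Bint: "B \<in> tinternal d B" using c unfolding tinternal_def by (simp add: tnodes.root)
    have pne: "N \<noteq> {}" if "C' \<in> tinternal d B" "N \<in> parts d C'" for C' N
    proof -
      have "C' \<subseteq> X" using tint_sub[OF that(1)] less.prems(1) by blast
      moreover have "finite C'" using calculation fX finite_subset by blast
      moreover have "2 \<le> card C'" using that(1) unfolding tinternal_def by blast
      ultimately show ?thesis using parts_ne[OF um _ _ _ that(2)] by blast
    qed
    have casesC: "C' = B \<or> (\<exists>Q\<in>parts d B. C' \<in> tinternal d Q)" if "C' \<in> tinternal d B" for C'
      using that tint_dec[OF c] by blast
    show ?thesis
    proof (intro ballI impI)
      fix N assume N: "N \<in> tnodes d B" "N \<noteq> B"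
      then obtain P where P: "P \<in> parts d B" "N \<in> tnodes d P" using tnodes_dec[OF c] by blast
      have PX: "P \<subseteq> X" using parts_sub[OF P(1)] less.prems(1) by blast
      have samepart: "Q = P" if "Q \<in> parts d B" "C' \<in> tinternal d Q" "N \<in> parts d C'" for Q C'
      proof -
        have "N \<subseteq> Q" using parts_sub[OF that(3)] tint_sub[OF that(2)] by blast
        moreover have "N \<subseteq> P" using tnodes_sub[OF P(2)] .
        moreover have "N \<noteq> {}"
        proof -
          have "C' \<in> tinternal d B" using that(1,2) tint_dec[OF c] by blast
          then show ?thesis using pne that(3) by blast
        qed
        ultimately show ?thesis using parts_disj[OF um less.prems(1) fin c that(1) P(1)] by blast
      qed
      show "\<exists>C\<in>tinternal d B. N \<in> parts d C \<and> (\<forall>C'\<in>tinternal d B. N \<in> parts d C' \<longrightarrow> C' = C)"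
      proof (cases "N = P")
        case True
        show ?thesis
        proof (intro bexI conjI ballI impI)
          show "N \<in> parts d B" using True P by simp
          fix C' assume C': "C' \<in> tinternal d B" "N \<in> parts d C'"
          show "C' = B"
          proof (rule ccontr)
            assume "C' \<noteq> B"
            then obtain Q where Q: "Q \<in> parts d B" "C' \<in> tinternal d Q" using casesC C' by blast
            have "Q = P" using samepart Q C' by blast
            then show False using noparent[OF um PX fX] Q(2) C'(2) True by simp
          qed
        qed (rule Bint)
      next
        case False
        have ex: "\<exists>C\<in>tinternal d P. N \<in> parts d C \<and> (\<forall>C'\<in>tinternal d P. N \<in> parts d C' \<longrightarrow> C' = C)"
          using IH[OF P(1), rule_format, OF P(2) False] .
        then obtain C0 where C0: "C0 \<in> tinternal d P" "N \<in> parts d C0"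
            "\<forall>C'\<in>tinternal d P. N \<in> parts d C' \<longrightarrow> C' = C0"
          by (elim bexE conjE) blast
        show ?thesis
        proof (intro bexI conjI ballI impI)
          show "C0 \<in> tinternal d B" using C0(1) P(1) tint_dec[OF c] by blast
          show "N \<in> parts d C0" using C0(2) .
          fix C' assume C': "C' \<in> tinternal d B" "N \<in> parts d C'"
          show "C' = C0"
          proof (cases "C' = B")
            case True
            then have "N \<in> parts d B" using C' by simp
            moreover have "N \<subseteq> P" using tnodes_sub[OF P(2)] .
            moreover have "N \<noteq> {}" using pne C' by blast
            ultimately have "N = P" using parts_disj[OF um less.prems(1) fin c _ P(1)] by blast
            then show ?thesis using False by simp
          next
            case False
            then obtain Q where Q: "Q \<in> parts d B" "C' \<in> tinternal d Q" using casesC C' by blast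
            have "Q = P" using samepart Q C' by blast
            then show ?thesis using C0(3) Q(2) C'(2) by blast
          qed
        qed
      qed
    qed
  qed
qed


theorem theorem13:
  fixes X :: "'a set" and d :: "'a \<Rightarrow> 'a \<Rightarrow> real"
  assumes "finite X" and "ultrametric X d" and "2 \<le> card X"
  shows "in_U X d \<longleftrightarrow>
           (strictly_binary d X \<and> inj_on (tlabel d) (tinternal d X))"
proof -
  note fX = assms(1) and um = assms(2) and c = assms(3)
  define T where "T = tinternal d X"
  have Xne: "X \<noteq> {}" using c by auto
  have cnt: "Sp d X = diam d ` T \<and> card T + 1 \<le> card X \<and>
     (card T + 1 = card X \<longleftrightarrow> (\<forall>I\<in>T. card (parts d I) = 2))"
    unfolding T_def using count[OF um fX order_refl Xne] .
  have Tfin: "finite T" unfolding T_def using tint_fin[OF fX] .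
  have XT: "X \<in> T" unfolding T_def tinternal_def using c by (simp add: tnodes.root)
  have adj: "{C \<in> tnodes d X. tadj d X I C} = parts d I \<union> {C \<in> T. I \<in> parts d C}"
    if I: "I \<in> T" for I
  proof -
    have "parts d I \<subseteq> tnodes d X" using I unfolding T_def tinternal_def
      by (auto intro: tnodes.child)
    moreover have "T \<subseteq> tnodes d X" unfolding T_def tinternal_def by auto
    ultimately show ?thesis using I unfolding tadj_def T_def by auto
  qed
  have Isub: "I \<subseteq> X" "finite I" "2 \<le> card I" if "I \<in> T" for I
  proof -
    show IX: "I \<subseteq> X" using that unfolding T_def by (rule tint_sub)
    show "finite I" using IX fX by (rule finite_subset)
    show "2 \<le> card I" using that unfolding T_def tinternal_def by simp
  qed
  have cardadj: "card {C \<in> tnodes d X. tadj d X I C} = card (parts d I) + (if I = X then 0 else 1)"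
    if I: "I \<in> T" for I
  proof (cases "I = X")
    case True
    have e: "{C \<in> T. I \<in> parts d C} = {}" using noparent[OF um order_refl fX] True unfolding T_def by blast
    have "{C \<in> tnodes d X. tadj d X I C} = parts d I" by (simp only: adj[OF I] e Un_empty_right)
    then show ?thesis using True by simp
  next
    case False
    have "I \<in> tnodes d X" using I unfolding T_def tinternal_def by blast
    then have ex: "\<exists>C\<in>T. I \<in> parts d C \<and> (\<forall>C'\<in>T. I \<in> parts d C' \<longrightarrow> C' = C)"
      using parent[OF um fX order_refl Xne, rule_format, OF _ False] unfolding T_def by simp
    then obtain C0 where C0: "C0 \<in> T" "I \<in> parts d C0" "\<forall>C'\<in>T. I \<in> parts d C' \<longrightarrow> C' = C0"
      by (elim bexE conjE) blast
    have single: "{C \<in> T. I \<in> parts d C} = {C0}" using C0 by blast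
    have "C0 \<notin> parts d I"
    proof
      assume "C0 \<in> parts d I"
      then have "C0 \<subseteq> I" using parts_sub by blast
      moreover have "I \<subseteq> C0" using parts_sub[OF C0(2)] .
      ultimately have "C0 = I" by blast
      then show False using C0(2) parts_not_self[OF um Isub[OF I]] by simp
    qed
    moreover have "finite (parts d I)" using parts_fin[OF um Isub[OF I]] .
    ultimately show ?thesis using adj[OF I] single False by simp
  qed
  have SB: "strictly_binary d X \<longleftrightarrow> (\<forall>I\<in>T. card (parts d I) = 2)"
  proof
    assume sb: "strictly_binary d X"
    show "\<forall>I\<in>T. card (parts d I) = 2"
    proof
      fix I assume I: "I \<in> T"
      show "card (parts d I) = 2"
      proof (cases "I = X")
        case True
        then show ?thesis using sb XT cardadj[OF I] unfolding strictly_binary_def T_def by simp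
      next
        case False
        then show ?thesis using sb I cardadj[OF I] unfolding strictly_binary_def T_def by simp
      qed
    qed
  next
    assume h: "\<forall>I\<in>T. card (parts d I) = 2"
    show "strictly_binary d X" unfolding strictly_binary_def
      using h cardadj XT unfolding T_def by simp
  qed
  have INJ: "inj_on (tlabel d) T \<longleftrightarrow> inj_on (diam d) T"
  proof -
    have "\<forall>I\<in>T. tlabel d I = Inr (diam d I)" unfolding T_def tinternal_def tlabel_def by simp
    then show ?thesis unfolding inj_on_def by auto
  qed
  have le1: "card (diam d ` T) \<le> card T" using card_image_le[OF Tfin] .
  have inj_eq: "inj_on (diam d) T \<longleftrightarrow> card (diam d ` T) = card T" using inj_on_iff_eq_card[OF Tfin] .
  have "in_U X d \<longleftrightarrow> card (Sp d X) = card X - 1" unfolding in_U_def using fX um by simp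
  also have "\<dots> \<longleftrightarrow> card (diam d ` T) = card T \<and> card T + 1 = card X" using cnt le1 by auto
  finally show ?thesis using SB INJ inj_eq cnt unfolding T_def by blast
qed

end
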